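(* Let $n=|V|\ge 4$ and suppose the designer does not know the relationship network. Then there is no valid mechanism $g:\boldsymbol\Theta\to[0,1]^V$ that is both DSIC and efficient.
   Context: Let $V=\{1,\dots,n\}$ be a finite set of agents. A relationship network on $V$ assigns to every unordered pair of distinct agents exactly one of three symmetric relations: friends, enemies, or impartial; $F_i,E_i,I_i$ denote the friends, enemies and impartials of $i$, partitioning $V\setminus\{i\}$. A state of the world is a pair consisting of a set $N\subseteq V$ of needy agents and a relationship network. Preferences: fix weights $w_f,w_e>0$; an agent with friend set $F$ and enemy set $E$ and own index $i$ ranks $p,p'\in[0,1]^V$ by $p\succ p'$ iff either $p_i>p'_i$, or $p_i=p'_i$ and $w_f\sum_{j\in F}(p_j-p'_j)-w_e\sum_{j\in E}(p_j-p'_j)>0$; $p\succsim p'$ means not $p'\succ p$. Unknown-network setting: agent $i$'s type set $\Theta_i$ consists of all triples $(N,F,E)$ with $N\subseteq V$ and $F,E$ disjoint subsets of $V\setminus\{i\}$; $\boldsymbol\Theta=\prod_{i\in V}\Theta_i$. A mechanism is $g:\boldsymbol\Theta\to[0,1]^V$; it is valid if $\sum_i g_i(\mathbf m)\le1$ for all $\mathbf m\in\boldsymbol\Theta$. It is DSIC if for all $i$, all $\mathbf m\in\boldsymbol\Theta$ and all $m'_i\in\Theta_i$, $g(\mathbf m)\succsim_{m_i} g(m'_i,\mathbf m_{-i})$, where $\succsim_{m_i}$ is the preference of agent $i$ with the friend and enemy sets given in $m_i$. At a state, the truthful profile is $m_i=(N,F_i,E_i)$ for all $i$. The mechanism is efficient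 if at every state with $N\neq\varnothing$, $\sum_{i\in N}g_i(\mathbf m)=1$ at the truthful profile $\mathbf m$. *)

theory Defs
  imports Complex_Main
begin

text \<open>Agents are V = {1..n}. A report (type) of an agent is a triple (N, F, E):
  claimed needy set, claimed friends, claimed enemies.\<close>

type_synonym report = "nat set \<times> nat set \<times> nat set"
type_synonym profile = "nat \<Rightarrow> report"
type_synonym mechanism = "profile \<Rightarrow> nat \<Rightarrow> real"

definition agents :: "nat \<Rightarrow> nat set" where
  "agents n = {1..n}"

definition type_set :: "nat \<Rightarrow> nat \<Rightarrow> report set" where
  "type_set n i = {(N, F, E). N \<subseteq> agents n \<and> F \<subseteq> agents n - {i} \<and>
                      E \<subseteq> agents n - {i} \<and> F \<inter> E = {}}"

text \<open>The product Theta of the Theta_i, i in V; coordinates outside V are fixed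
  to a dummy value so that profiles correspond bijectively to elements of Theta.\<close>
definition profiles :: "nat \<Rightarrow> profile set" where
  "profiles n = {m. (\<forall>i\<in>agents n. m i \<in> type_set n i) \<and>
                    (\<forall>i. i \<notin> agents n \<longrightarrow> m i = ({}, {}, {}))}"

definition strict_pref ::
  "real \<Rightarrow> real \<Rightarrow> nat \<Rightarrow> nat set \<Rightarrow> nat set \<Rightarrow> (nat \<Rightarrow> real) \<Rightarrow> (nat \<Rightarrow> real) \<Rightarrow> bool" where
  "strict_pref w_f w_e i F E p p' \<longleftrightarrow>
     p i > p' i \<or>
     (p i = p' i \<and> w_f * (\<Sum>j\<in>F. p j - p' j) - w_e * (\<Sum>j\<in>E. p j - p' j) > 0)"

definition weak_pref ::
  "real \<Rightarrow> real \<Rightarrow> nat \<Rightarrow> nat set \<Rightarrow> nat set \<Rightarrow> (nat \<Rightarrow> real) \<Rightarrow> (nat \<Rightarrow> real) \<Rightarrow> bool" where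
  "weak_pref w_f w_e i F E p p' \<longleftrightarrow> \<not> strict_pref w_f w_e i F E p' p"

definition is_mechanism :: "nat \<Rightarrow> mechanism \<Rightarrow> bool" where
  "is_mechanism n g \<longleftrightarrow> (\<forall>m\<in>profiles n. \<forall>i\<in>agents n. 0 \<le> g m i \<and> g m i \<le> 1)"

definition valid :: "nat \<Rightarrow> mechanism \<Rightarrow> bool" where
  "valid n g \<longleftrightarrow> (\<forall>m\<in>profiles n. (\<Sum>i\<in>agents n. g m i) \<le> 1)"

definition dsic :: "real \<Rightarrow> real \<Rightarrow> nat \<Rightarrow> mechanism \<Rightarrow> bool" where
  "dsic w_f w_e n g \<longleftrightarrow>
     (\<forall>i\<in>agents n. \<forall>m\<in>profiles n. \<forall>t\<in>type_set n i.
        weak_pref w_f w_e i (fst (snd (m i))) (snd (snd (m i))) (g m) (g (m(i := t))))"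

text \<open>A relationship network on V: symmetric friend and enemy relations on distinct
  agents, never both; all remaining pairs of distinct agents are impartial.\<close>
definition is_network :: "nat \<Rightarrow> (nat \<Rightarrow> nat \<Rightarrow> bool) \<Rightarrow> (nat \<Rightarrow> nat \<Rightarrow> bool) \<Rightarrow> bool" where
  "is_network n Fr En \<longleftrightarrow>
     (\<forall>i\<in>agents n. \<forall>j\<in>agents n.
        (Fr i j \<longleftrightarrow> Fr j i) \<and> (En i j \<longleftrightarrow> En j i) \<and> \<not> (Fr i j \<and> En i j))"

definition truthful_profile ::
  "nat \<Rightarrow> nat set \<Rightarrow> (nat \<Rightarrow> nat \<Rightarrow> bool) \<Rightarrow> (nat \<Rightarrow> nat \<Rightarrow> bool) \<Rightarrow> profile" where
  "truthful_profile n N Fr En = (\<lambda>i. if i \<in> agents n then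
      (N, {j\<in>agents n. j \<noteq> i \<and> Fr i j}, {j\<in>agents n. j \<noteq> i \<and> En i j})
    else ({}, {}, {}))"

definition efficient :: "nat \<Rightarrow> mechanism \<Rightarrow> bool" where
  "efficient n g \<longleftrightarrow>
     (\<forall>N Fr En. N \<subseteq> agents n \<longrightarrow> N \<noteq> {} \<longrightarrow> is_network n Fr En \<longrightarrow>
        (\<Sum>i\<in>N. g (truthful_profile n N Fr En) i) = 1)"

end

theory Submission
  imports Defs
begin

lemma upd_profile:
  assumes "m \<in> profiles n" "i \<in> agents n" "t \<in> type_set n i"
  shows "m(i := t) \<in> profiles n"
  using assms unfolding profiles_def by auto

lemma own_indep:
  assumes d: "dsic w_f w_e n g" and m: "m \<in> profiles n" and i: "i \<in> agents n"
    and t: "t \<in> type_set n i"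
  shows "g (m(i := t)) i = g m i"
proof -
  have m': "m(i := t) \<in> profiles n" using upd_profile[OF m i t] .
  have mi: "m i \<in> type_set n i" using m i unfolding profiles_def by auto
  have "weak_pref w_f w_e i (fst (snd (m i))) (snd (snd (m i))) (g m) (g (m(i := t)))"
    using d m i t unfolding dsic_def by blast
  hence 1: "g (m(i := t)) i \<le> g m i" unfolding weak_pref_def strict_pref_def by auto
  have "weak_pref w_f w_e i (fst (snd t)) (snd (snd t)) (g (m(i:=t))) (g ((m(i := t))(i := m i)))"
    using d m' i mi unfolding dsic_def by fastforce
  hence 2: "g m i \<le> g (m(i := t)) i" unfolding weak_pref_def strict_pref_def by auto
  show ?thesis using 1 2 by linarith
qed

lemma friend_indep:
  assumes d: "dsic w_f w_e n g" and wf: "w_f > 0" and m: "m \<in> profiles n" and i: "i \<in> agents n"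
    and t: "t \<in> type_set n i" and s1: "snd (m i) = ({j}, {})" and s2: "snd t = ({j}, {})"
  shows "g (m(i := t)) j = g m j"
proof -
  have m': "m(i := t) \<in> profiles n" using upd_profile[OF m i t] .
  have mi: "m i \<in> type_set n i" using m i unfolding profiles_def by auto
  have eq: "g (m(i := t)) i = g m i" using own_indep[OF d m i t] .
  have "weak_pref w_f w_e i (fst (snd (m i))) (snd (snd (m i))) (g m) (g (m(i := t)))"
    using d m i t unfolding dsic_def by blast
  hence "\<not> (w_f * (g (m(i := t)) j - g m j) > 0)"
    using eq s1 unfolding weak_pref_def strict_pref_def by auto
  hence 1: "g (m(i := t)) j \<le> g m j" using wf
    by (metis diff_gt_0_iff_gt linorder_not_le mult_pos_pos)
  have "weak_pref w_f w_e i (fst (snd t)) (snd (snd t)) (g (m(i:=t))) (g ((m(i := t))(i := m i)))"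
    using d m' i mi unfolding dsic_def by fastforce
  hence "\<not> (w_f * (g m j - g (m(i := t)) j) > 0)"
    using eq s2 unfolding weak_pref_def strict_pref_def by auto
  hence 2: "g m j \<le> g (m(i := t)) j" using wf
    by (metis diff_gt_0_iff_gt linorder_not_le mult_pos_pos)
  show ?thesis using 1 2 by linarith
qed

definition Frn :: "nat \<Rightarrow> nat \<Rightarrow> bool" where
  "Frn i j \<longleftrightarrow> (i = 1 \<and> j \<noteq> 1 \<and> j \<noteq> 3) \<or> (j = 1 \<and> i \<noteq> 1 \<and> i \<noteq> 3)"

definition Fs :: "nat \<Rightarrow> nat \<Rightarrow> nat set" where
  "Fs n i = {j\<in>agents n. j \<noteq> i \<and> Frn i j}"

definition P :: "nat \<Rightarrow> (nat \<Rightarrow> nat set) \<Rightarrow> profile" where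
  "P n r = (\<lambda>i. if i \<in> agents n then (r i, Fs n i, {}) else ({}, {}, {}))"

lemma P_truthful: "P n (\<lambda>_. N) = truthful_profile n N Frn (\<lambda>_ _. False)"
  unfolding P_def truthful_profile_def Fs_def by auto

lemma network: "is_network n Frn (\<lambda>_ _. False)"
  unfolding is_network_def Frn_def by auto

lemma P_prof: assumes "\<forall>i\<in>agents n. r i \<subseteq> agents n" shows "P n r \<in> profiles n"
  using assms unfolding profiles_def P_def type_set_def Fs_def by auto

lemma Fs_leaf: assumes "n \<ge> 4" "a \<in> agents n" "a \<noteq> 1" "a \<noteq> 3" shows "Fs n a = {1}"
  using assms unfolding Fs_def Frn_def agents_def by auto

lemma chain:
  assumes d: "dsic w_f w_e n g" and wf: "w_f > 0" and n4: "n \<ge> 4"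
  shows "finite A \<Longrightarrow> A \<subseteq> agents n - {3} \<Longrightarrow> \<forall>i\<in>agents n. r i \<subseteq> agents n \<Longrightarrow>
     \<forall>i\<in>agents n. r' i \<subseteq> agents n \<Longrightarrow> \<forall>i\<in>agents n - A. r i = r' i \<Longrightarrow>
     g (P n r) 1 = g (P n r') 1"
proof (induction A arbitrary: r' rule: finite_induct)
  case empty
  have "P n r = P n r'" using empty unfolding P_def by auto
  then show ?case by simp
next
  case (insert a A)
  define r'' where "r'' = r'(a := r a)"
  have IH: "g (P n r) 1 = g (P n r'') 1"
    using insert unfolding r''_def by (intro insert.IH) auto
  have a: "a \<in> agents n" "a \<noteq> 3" using insert by auto
  have pr'': "P n r'' \<in> profiles n" using insert a unfolding r''_def by (intro P_prof) auto
  have eqP: "P n r' = (P n r'')(a := (r' a, Fs n a, {}))"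
    unfolding P_def r''_def using a by auto
  have t: "(r' a, Fs n a, {}) \<in> type_set n a"
    using insert a unfolding type_set_def Fs_def by auto
  have "g (P n r') 1 = g (P n r'') 1"
  proof (cases "a = 1")
    case True
    then show ?thesis using eqP own_indep[OF d pr'' a(1) t] by simp
  next
    case False
    have fs: "Fs n a = {1}" using Fs_leaf[OF n4 a(1) False a(2)] .
    show ?thesis unfolding eqP
      by (rule friend_indep[OF d wf pr'' a(1) t]) (use a fs in \<open>auto simp: P_def\<close>)
  qed
  then show ?case using IH by simp
qed

theorem theorem4:
  fixes n :: nat and w_f w_e :: real
  assumes "n \<ge> 4" and "w_f > 0" and "w_e > 0"
  shows "\<not> (\<exists>g. is_mechanism n g \<and> valid n g \<and> dsic w_f w_e n g \<and> efficient n g)"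
proof
  assume "\<exists>g. is_mechanism n g \<and> valid n g \<and> dsic w_f w_e n g \<and> efficient n g"
  then obtain g where mech: "is_mechanism n g" and val: "valid n g" and d: "dsic w_f w_e n g"
    and eff: "efficient n g" by blast
  have in1: "1 \<in> agents n" and in3: "3 \<in> agents n" using assms(1) unfolding agents_def by auto
  define r0 where "r0 = (\<lambda>i::nat. if i = 3 then {1::nat} else {3})"
  have r0s: "\<forall>i\<in>agents n. r0 i \<subseteq> agents n" using in1 in3 unfolding r0_def by auto
  have c1: "\<forall>i\<in>agents n. (\<lambda>_. {1::nat}) i \<subseteq> agents n" using in1 by auto
  have c3: "\<forall>i\<in>agents n. (\<lambda>_. {3::nat}) i \<subseteq> agents n" using in3 by auto
  have e1: "g (P n (\<lambda>_. {1})) 1 = 1"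
  proof -
    have "(\<Sum>i\<in>{1::nat}. g (truthful_profile n {1} Frn (\<lambda>_ _. False)) i) = 1"
      using eff in1 network unfolding efficient_def agents_def
      by (metis empty_iff insert_iff insert_subset empty_subsetI)
    thus ?thesis by (simp add: P_truthful)
  qed
  have e3: "g (P n (\<lambda>_. {3})) 3 = 1"
  proof -
    have "(\<Sum>i\<in>{3::nat}. g (truthful_profile n {3} Frn (\<lambda>_ _. False)) i) = 1"
      using eff in3 network unfolding efficient_def agents_def
      by (metis empty_iff insert_iff insert_subset empty_subsetI)
    thus ?thesis by (simp add: P_truthful)
  qed
  have "g (P n r0) 1 = g (P n (\<lambda>_. {1})) 1"
    by (rule chain[OF d assms(2) assms(1), of "agents n - {3}"])
       (use r0s c1 in \<open>auto simp: agents_def r0_def\<close>)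
  hence g1: "g (P n r0) 1 = 1" using e1 by simp
  have pr3: "P n (\<lambda>_. {3}) \<in> profiles n" using P_prof[OF c3] .
  have t3: "({1}, Fs n 3, {}) \<in> type_set n 3"
    using in1 unfolding type_set_def Fs_def by auto
  have eqP: "P n r0 = (P n (\<lambda>_. {3}))(3 := ({1}, Fs n 3, {}))"
    unfolding P_def r0_def using in3 by auto
  have g3: "g (P n r0) 3 = 1" using own_indep[OF d pr3 in3 t3] eqP e3 by simp
  have pr0: "P n r0 \<in> profiles n" using P_prof[OF r0s] .
  have "(\<Sum>i\<in>{1,3}. g (P n r0) i) \<le> (\<Sum>i\<in>agents n. g (P n r0) i)"
    by (rule sum_mono2) (use in1 in3 mech pr0 in \<open>auto simp: agents_def is_mechanism_def\<close>)
  also have "\<dots> \<le> 1" using val pr0 unfolding valid_def by blast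
  finally show False using g1 g3 by simp
qed

end
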